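(* Let $f=f_1+f_2$ and $l=l_1+l_2$ be as in the context and assume there are $C\ge0$, $C_1\ge0$, $C_2,C_3>0$ such that for all $x\in H$, $\mu\in\mathcal P_2(H)$, $q\in\tilde\Lambda$: $|f_2(x,\mu,q)|\le C(1+|q|_\Lambda)$ and $-C_1+C_2|q|_\Lambda^2\le l_2(x,\mu,q)\le C_1+C_3|q|_\Lambda^2$ (and $|f(x,\mu,q)|_{-1}\le C(1+|x|_{-1}+\mathcal M_{-1,r}^{1/r}(\mu)+|q|_\Lambda)$ for a fixed $r\in[1,2)$). Then for every $\tilde C>0$ there is a constant $K>0$ such that $$\mathcal H_n(\mathbf x,\mu,\mathbf p)=\mathcal H_n^{K\sqrt n}(\mathbf x,\mu,\mathbf p)$$ for all $n\in\mathbb N$, $\mu\in\mathcal P_2(H)$ and $\mathbf x,\mathbf p\in H^n$ with $|\mathbf p|_{H^n}\le\tilde C/\sqrt n$.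
   Context: $H,\Lambda$ real separable Hilbert spaces ($H$: inner product $\langle\cdot,\cdot\rangle$, norm $|\cdot|$; $\Lambda$: norm $|\cdot|_\Lambda$), $\tilde\Lambda\subset\Lambda$ convex. $B\in L(H)$ self-adjoint, strictly positive, $|x|_{-1}^2=\langle Bx,x\rangle$; $\mathcal P_2(H)$ probability measures with finite second moment; $\mathcal M_{-1,r}(\mu)=\int|x|_{-1}^r\mu(dx)$. $f=f_1+f_2$ with $f_1:H\times\mathcal P_2(H)\to H$, $f_2:H\times\mathcal P_2(H)\times\Lambda\to H$; $l=l_1+l_2$ with $l_1:H\times\mathcal P_2(H)\to\mathbb R$, $l_2:H\times\mathcal P_2(H)\times\Lambda\to\mathbb R$ continuous. For $\mathbf x,\mathbf p\in H^n$, $|\mathbf p|_{H^n}=(\sum|p_i|^2)^{1/2}$, $\mathbf q\in\tilde\Lambda^n$, $|\mathbf q|_{\Lambda^n}=(\sum|q_i|_\Lambda^2)^{1/2}$, and $\mathcal H_n(\mathbf x,\mu,\mathbf p)=\frac1n\inf_{\mathbf q\in\tilde\Lambda^n}\sum_{i=1}^n(\langle f(x_i,\mu,q_i),np_i\rangle+l(x_i,\mu,q_i))$, $\mathcal H_n^m(\mathbf x,\mu,\mathbf p)=\frac1n\inf_{\mathbf q\in\tilde\Lambda^n,|\mathbf q|_{\Lambda^n}\le m}\sum_{i=1}^n(\langle f(x_i,\mu,q_i),np_i\rangle+l(x_i,\mu,q_i))$ for $m>0$. *)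

theory Defs
  imports "HOL-Probability.Probability"
begin

definition P2 :: "'h::{real_inner,polish_space} measure set" where
  "P2 = {\<mu>. sets \<mu> = sets borel \<and> prob_space \<mu> \<and> integrable \<mu> (\<lambda>x. (norm x)\<^sup>2)}"

definition admissible_B :: "('h::real_inner \<Rightarrow> 'h) \<Rightarrow> bool" where
  "admissible_B B \<longleftrightarrow> bounded_linear B \<and> (\<forall>x y. inner (B x) y = inner x (B y))
     \<and> (\<forall>x. x \<noteq> 0 \<longrightarrow> inner (B x) x > 0)"

definition norm_m1 :: "('h::real_inner \<Rightarrow> 'h) \<Rightarrow> 'h \<Rightarrow> real" where
  "norm_m1 B x = sqrt (inner (B x) x)"

definition M_m1 :: "('h::{real_inner,polish_space} \<Rightarrow> 'h) \<Rightarrow> real \<Rightarrow> 'h measure \<Rightarrow> real" where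
  "M_m1 B r \<mu> = (\<integral>x. (norm_m1 B x) powr r \<partial>\<mu>)"

text \<open>Vectors in H^n / Lambda^n are functions on indices i < n.\<close>
definition Hn :: "('h::real_inner \<Rightarrow> 'm \<Rightarrow> 'l::real_inner \<Rightarrow> 'h) \<Rightarrow> ('h \<Rightarrow> 'm \<Rightarrow> 'l \<Rightarrow> real)
     \<Rightarrow> 'l set \<Rightarrow> nat \<Rightarrow> (nat \<Rightarrow> 'h) \<Rightarrow> 'm \<Rightarrow> (nat \<Rightarrow> 'h) \<Rightarrow> real" where
  "Hn f l Lt n x \<mu> p = (1 / real n) * Inf {(\<Sum>i<n. inner (f (x i) \<mu> (q i)) (real n *\<^sub>R p i) + l (x i) \<mu> (q i))
       | q. \<forall>i<n. q i \<in> Lt}"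

definition Hn_m :: "('h::real_inner \<Rightarrow> 'm \<Rightarrow> 'l::real_inner \<Rightarrow> 'h) \<Rightarrow> ('h \<Rightarrow> 'm \<Rightarrow> 'l \<Rightarrow> real)
     \<Rightarrow> 'l set \<Rightarrow> real \<Rightarrow> nat \<Rightarrow> (nat \<Rightarrow> 'h) \<Rightarrow> 'm \<Rightarrow> (nat \<Rightarrow> 'h) \<Rightarrow> real" where
  "Hn_m f l Lt m n x \<mu> p = (1 / real n) * Inf {(\<Sum>i<n. inner (f (x i) \<mu> (q i)) (real n *\<^sub>R p i) + l (x i) \<mu> (q i))
       | q. (\<forall>i<n. q i \<in> Lt) \<and> sqrt (\<Sum>i<n. (norm (q i))\<^sup>2) \<le> m}"

end

theory Submission
  imports Defs
begin

lemma inf_eq_aux: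
  fixes S T :: "real set"
  assumes "T \<subseteq> S" "T \<noteq> {}" "bdd_below T" "\<forall>s\<in>S. \<exists>t\<in>T. t \<le> s"
  shows "Inf S = Inf T"
proof -
  obtain b where b: "\<forall>t\<in>T. b \<le> t" using assms(3) unfolding bdd_below_def by auto
  have bS: "bdd_below S" unfolding bdd_below_def
  proof (intro exI ballI)
    fix s assume "s \<in> S"
    then obtain t where "t \<in> T" "t \<le> s" using assms(4) by auto
    then show "b \<le> s" using b by force
  qed
  have S0: "S \<noteq> {}" using assms(1,2) by auto
  have "Inf S \<le> Inf T" by (rule cInf_superset_mono[OF assms(2) bS assms(1)])
  moreover have "Inf T \<le> Inf S"
  proof (rule cInf_greatest[OF S0])
    fix s assume "s \<in> S"
    then obtain t where "t \<in> T" "t \<le> s" using assms(4) by auto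
    then show "Inf T \<le> s" using cInf_lower[OF _ assms(3)] by fastforce
  qed
  ultimately show ?thesis by simp
qed

lemma quad_aux:
  fixes s N K c A C2 :: real
  assumes "s \<ge> 1" "K \<ge> 1" "K \<ge> (c + A) / C2" "C2 > 0" "N > K * s" "c \<ge> 0" "A \<ge> 0"
  shows "C2 * N\<^sup>2 - c * s * N \<ge> s\<^sup>2 * A"
proof -
  define t where "t = N / s"
  have sp: "s > 0" using assms by simp
  have N: "N = t * s" using sp t_def by simp
  have tK: "t > K" using assms(5) sp N by (simp add: mult_less_cancel_right)
  have t1: "t \<ge> 1" using tK assms(2) by simp
  have "C2 * K \<ge> c + A" using assms(3,4) by (simp add: pos_divide_le_eq mult.commute)
  moreover have "C2 * K \<le> C2 * t" using tK assms(4) by simp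
  ultimately have "C2 * t \<ge> c + A" by linarith
  hence "C2 * t * t \<ge> (c + A) * t" using t1 by (simp add: mult_right_mono)
  moreover have "A * t \<ge> A * 1" using t1 assms(7) by (rule mult_left_mono)
  moreover have "(c + A) * t = c * t + A * t" by (simp add: algebra_simps)
  ultimately have "C2 * t * t - c * t \<ge> A" by linarith
  hence "s\<^sup>2 * (C2 * t * t - c * t) \<ge> s\<^sup>2 * A" by (simp add: mult_left_mono)
  thus ?thesis unfolding N by (simp add: power2_eq_square algebra_simps)
qed

theorem lemma4p8:
  fixes B :: "'h::{real_inner,polish_space} \<Rightarrow> 'h"
    and Lt :: "'l::{real_inner,polish_space} set"
    and f1 :: "'h \<Rightarrow> 'h measure \<Rightarrow> 'h"
    and f2 :: "'h \<Rightarrow> 'h measure \<Rightarrow> 'l \<Rightarrow> 'h"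
    and l1 :: "'h \<Rightarrow> 'h measure \<Rightarrow> real"
    and l2 :: "'h \<Rightarrow> 'h measure \<Rightarrow> 'l \<Rightarrow> real"
    and C C1 C2 C3 r :: real
  assumes B: "admissible_B B"
    and Lt_convex: "convex Lt"
    and r: "1 \<le> r" "r < 2"
    and constants: "C \<ge> 0" "C1 \<ge> 0" "C2 > 0" "C3 > 0"
    and f2_bound: "\<And>x \<mu> q. \<mu> \<in> P2 \<Longrightarrow> q \<in> Lt \<Longrightarrow> norm (f2 x \<mu> q) \<le> C * (1 + norm q)"
    and l2_lower: "\<And>x \<mu> q. \<mu> \<in> P2 \<Longrightarrow> q \<in> Lt \<Longrightarrow> - C1 + C2 * (norm q)\<^sup>2 \<le> l2 x \<mu> q"
    and l2_upper: "\<And>x \<mu> q. \<mu> \<in> P2 \<Longrightarrow> q \<in> Lt \<Longrightarrow> l2 x \<mu> q \<le> C1 + C3 * (norm q)\<^sup>2"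
    and f_bound: "\<And>x \<mu> q. \<mu> \<in> P2 \<Longrightarrow> q \<in> Lt \<Longrightarrow>
        norm_m1 B (f1 x \<mu> + f2 x \<mu> q) \<le> C * (1 + norm_m1 B x + (M_m1 B r \<mu>) powr (1 / r) + norm q)"
  shows "\<forall>Ct>0. \<exists>K>0. \<forall>n::nat. \<forall>\<mu> x p. n \<ge> 1 \<longrightarrow> \<mu> \<in> P2 \<longrightarrow>
           sqrt (\<Sum>i<n. (norm (p i))\<^sup>2) \<le> Ct / sqrt (real n) \<longrightarrow>
           Hn (\<lambda>x \<mu> q. f1 x \<mu> + f2 x \<mu> q) (\<lambda>x \<mu> q. l1 x \<mu> + l2 x \<mu> q) Lt n x \<mu> p
           = Hn_m (\<lambda>x \<mu> q. f1 x \<mu> + f2 x \<mu> q) (\<lambda>x \<mu> q. l1 x \<mu> + l2 x \<mu> q) Lt (K * sqrt (real n)) n x \<mu> p"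
proof (intro allI impI)
  fix Ct :: real assume Ct: "Ct > 0"
  show "\<exists>K>0. \<forall>n::nat. \<forall>\<mu> x p. n \<ge> 1 \<longrightarrow> \<mu> \<in> P2 \<longrightarrow>
           sqrt (\<Sum>i<n. (norm (p i))\<^sup>2) \<le> Ct / sqrt (real n) \<longrightarrow>
           Hn (\<lambda>x \<mu> q. f1 x \<mu> + f2 x \<mu> q) (\<lambda>x \<mu> q. l1 x \<mu> + l2 x \<mu> q) Lt n x \<mu> p
           = Hn_m (\<lambda>x \<mu> q. f1 x \<mu> + f2 x \<mu> q) (\<lambda>x \<mu> q. l1 x \<mu> + l2 x \<mu> q) Lt (K * sqrt (real n)) n x \<mu> p"
  proof (cases "Lt = {}")
    case True
    show ?thesis
    proof (intro exI[of _ 1] conjI allI impI)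
      fix n :: nat and \<mu> :: "'h measure" and x :: "nat \<Rightarrow> 'h" and p :: "nat \<Rightarrow> 'h" assume "n \<ge> 1"
      then have nq: "\<And>q. \<not> (\<forall>i<n. q i \<in> Lt)" using True by (metis empty_iff One_nat_def Suc_le_eq)
      show "Hn (\<lambda>x \<mu> q. f1 x \<mu> + f2 x \<mu> q) (\<lambda>x \<mu> q. l1 x \<mu> + l2 x \<mu> q) Lt n x \<mu> p
           = Hn_m (\<lambda>x \<mu> q. f1 x \<mu> + f2 x \<mu> q) (\<lambda>x \<mu> q. l1 x \<mu> + l2 x \<mu> q) Lt (1 * sqrt (real n)) n x \<mu> p"
      proof -
        have e1: "\<And>(g::(nat \<Rightarrow> 'l) \<Rightarrow> real) P. {g q | q. (\<forall>i<n. q i \<in> Lt) \<and> P q} = {}" using nq by blast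
        have e2: "\<And>(g::(nat \<Rightarrow> 'l) \<Rightarrow> real). {g q | q. \<forall>i<n. q i \<in> Lt} = {}" using nq by blast
        show ?thesis unfolding Hn_def Hn_m_def e1 e2 by simp
      qed
    qed simp
  next
    case False
    then obtain q0 where q0: "q0 \<in> Lt" by auto
    define A where "A = 2*C*Ct + C*Ct*norm q0 + 2*C1 + C3*(norm q0)\<^sup>2"
    define K where "K = max 1 (max (norm q0) ((C*Ct + A)/C2))"
    have A0: "A \<ge> 0" unfolding A_def using constants Ct by simp
    have K1: "K \<ge> 1" "K \<ge> norm q0" "K \<ge> (C*Ct + A)/C2" unfolding K_def by auto
    show ?thesis
    proof (intro exI[of _ K] conjI allI impI)
      show "K > 0" using K1 by simp
      fix n :: nat and \<mu> :: "'h measure" and x :: "nat \<Rightarrow> 'h" and p :: "nat \<Rightarrow> 'h"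
      assume n1: "n \<ge> 1" and mu: "\<mu> \<in> P2" and pb: "sqrt (\<Sum>i<n. (norm (p i))\<^sup>2) \<le> Ct / sqrt (real n)"
      define s where "s = sqrt (real n)"
      have s1: "s \<ge> 1" using n1 unfolding s_def by simp
      have ns: "real n = s\<^sup>2" unfolding s_def by simp
      define P where "P = sqrt (\<Sum>i<n. (norm (p i))\<^sup>2)"
      have P0: "P \<ge> 0" unfolding P_def by (simp add: sum_nonneg)
      have Pb: "P \<le> Ct / s" using pb unfolding P_def s_def .
      define g where "g q = (\<Sum>i<n. inner (f1 (x i) \<mu> + f2 (x i) \<mu> (q i)) (real n *\<^sub>R p i) + (l1 (x i) \<mu> + l2 (x i) \<mu> (q i)))" for q
      define a where "a = (\<Sum>i<n. inner (f1 (x i) \<mu>) (real n *\<^sub>R p i) + l1 (x i) \<mu>)"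
      define h where "h q = (\<Sum>i<n. inner (f2 (x i) \<mu> (q i)) (real n *\<^sub>R p i) + l2 (x i) \<mu> (q i))" for q
      have gah: "g q = a + h q" for q
        unfolding g_def a_def h_def by (simp add: inner_add_left sum.distrib[symmetric] algebra_simps)
      define NN where "NN q = sqrt (\<Sum>i<n. (norm (q i))\<^sup>2)" for q :: "nat \<Rightarrow> 'l"
      have sum_p: "(\<Sum>i<n. norm (p i)) \<le> Ct"
      proof -
        have "(\<Sum>i<n. norm (p i)) = (\<Sum>i<n. \<bar>1::real\<bar> * \<bar>norm (p i)\<bar>)" by simp
        also have "\<dots> \<le> L2_set (\<lambda>_. 1::real) {..<n} * L2_set (\<lambda>i. norm (p i)) {..<n}"
          by (rule L2_set_mult_ineq)
        also have "\<dots> = s * P" unfolding L2_set_def s_def P_def by simp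
        also have "\<dots> \<le> s * (Ct / s)" using Pb s1 by (intro mult_left_mono) auto
        also have "\<dots> = Ct" using s1 by simp
        finally show ?thesis .
      qed
      have sum_qp: "(\<Sum>i<n. norm (q i) * norm (p i)) \<le> NN q * Ct / s" for q :: "nat \<Rightarrow> 'l"
      proof -
        have "(\<Sum>i<n. norm (q i) * norm (p i)) = (\<Sum>i<n. \<bar>norm (q i)\<bar> * \<bar>norm (p i)\<bar>)" by simp
        also have "\<dots> \<le> L2_set (\<lambda>i. norm (q i)) {..<n} * L2_set (\<lambda>i. norm (p i)) {..<n}"
          by (rule L2_set_mult_ineq)
        also have "\<dots> = NN q * P" unfolding L2_set_def NN_def P_def by simp
        also have "\<dots> \<le> NN q * (Ct / s)" using Pb by (intro mult_left_mono) (auto simp: NN_def sum_nonneg)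
        finally show ?thesis by simp
      qed
      have lower: "h q \<ge> - C * real n * Ct - C * Ct * s * NN q - real n * C1 + C2 * (NN q)\<^sup>2"
        if q: "\<forall>i<n. q i \<in> Lt" for q
      proof -
        have trm: "inner (f2 (x i) \<mu> (q i)) (real n *\<^sub>R p i) + l2 (x i) \<mu> (q i)
            \<ge> - C * real n * norm (p i) - C * real n * (norm (q i) * norm (p i)) - C1 + C2 * (norm (q i))\<^sup>2"
          if i: "i < n" for i
        proof -
          have qi: "q i \<in> Lt" using q i by auto
          have "inner (f2 (x i) \<mu> (q i)) (real n *\<^sub>R p i) \<ge> - (norm (f2 (x i) \<mu> (q i)) * (real n * norm (p i)))"
            using Cauchy_Schwarz_ineq2[of "f2 (x i) \<mu> (q i)" "real n *\<^sub>R p i"] by (simp add: abs_le_iff)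
          moreover have "norm (f2 (x i) \<mu> (q i)) * (real n * norm (p i)) \<le> C * (1 + norm (q i)) * (real n * norm (p i))"
            using f2_bound[OF mu qi] by (simp add: mult_right_mono)
          ultimately show ?thesis using l2_lower[where x="x i", OF mu qi] by (simp add: algebra_simps)
        qed
        have "h q \<ge> (\<Sum>i<n. - C * real n * norm (p i) - C * real n * (norm (q i) * norm (p i)) - C1 + C2 * (norm (q i))\<^sup>2)"
          unfolding h_def by (rule sum_mono) (use trm in auto)
        also have "(\<Sum>i<n. - C * real n * norm (p i) - C * real n * (norm (q i) * norm (p i)) - C1 + C2 * (norm (q i))\<^sup>2)
          = - C * real n * (\<Sum>i<n. norm (p i)) - C * real n * (\<Sum>i<n. norm (q i) * norm (p i)) - real n * C1 + C2 * (NN q)\<^sup>2"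
          unfolding NN_def by (simp add: sum.distrib sum_subtractf sum_distrib_left sum_nonneg)
        finally have 1: "h q \<ge> - C * real n * (\<Sum>i<n. norm (p i)) - C * real n * (\<Sum>i<n. norm (q i) * norm (p i)) - real n * C1 + C2 * (NN q)\<^sup>2" .
        have 2: "C * real n * (\<Sum>i<n. norm (p i)) \<le> C * real n * Ct"
          using sum_p constants by (simp add: mult_left_mono)
        have "C * real n * (\<Sum>i<n. norm (q i) * norm (p i)) \<le> C * real n * (NN q * Ct / s)"
          using sum_qp[of q] constants by (intro mult_left_mono) auto
        also have "\<dots> = C * Ct * s * NN q" using s1 unfolding ns power2_eq_square by (simp add: field_simps)
        finally show ?thesis using 1 2 by linarith
      qed
      define q0v where "q0v = (\<lambda>_::nat. q0)"
      have q0v: "\<forall>i<n. q0v i \<in> Lt" using q0 unfolding q0v_def by simp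
      have NNq0: "NN q0v = s * norm q0" unfolding NN_def q0v_def s_def by (simp add: real_sqrt_mult)
      have upper: "h q0v \<le> C * (1 + norm q0) * real n * Ct + real n * C1 + real n * C3 * (norm q0)\<^sup>2"
      proof -
        have "h q0v \<le> (\<Sum>i<n. C * (1 + norm q0) * real n * norm (p i) + (C1 + C3 * (norm q0)\<^sup>2))"
          unfolding h_def
        proof (rule sum_mono)
          fix i assume "i \<in> {..<n}"
          have "inner (f2 (x i) \<mu> q0) (real n *\<^sub>R p i) \<le> norm (f2 (x i) \<mu> q0) * (real n * norm (p i))"
            using Cauchy_Schwarz_ineq2[of "f2 (x i) \<mu> q0" "real n *\<^sub>R p i"] by (simp add: abs_le_iff)
          also have "\<dots> \<le> C * (1 + norm q0) * (real n * norm (p i))"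
            using f2_bound[OF mu q0] by (simp add: mult_right_mono)
          finally show "inner (f2 (x i) \<mu> (q0v i)) (real n *\<^sub>R p i) + l2 (x i) \<mu> (q0v i)
              \<le> C * (1 + norm q0) * real n * norm (p i) + (C1 + C3 * (norm q0)\<^sup>2)"
            using l2_upper[where x="x i", OF mu q0] unfolding q0v_def by (simp add: algebra_simps)
        qed
        also have "\<dots> = C * (1 + norm q0) * real n * (\<Sum>i<n. norm (p i)) + real n * (C1 + C3 * (norm q0)\<^sup>2)"
          by (simp add: sum.distrib sum_distrib_left)
        also have "\<dots> \<le> C * (1 + norm q0) * real n * Ct + real n * (C1 + C3 * (norm q0)\<^sup>2)"
          using sum_p constants by (intro add_right_mono mult_left_mono) auto
        finally show ?thesis by (simp add: algebra_simps)
      qed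
      define S where "S = {g q | q. \<forall>i<n. q i \<in> Lt}"
      define T where "T = {g q | q. (\<forall>i<n. q i \<in> Lt) \<and> NN q \<le> K * s}"
      have "Inf S = Inf T"
      proof (rule inf_eq_aux)
        show "T \<subseteq> S" unfolding S_def T_def by auto
        have "NN q0v \<le> K * s" using NNq0 K1 s1 by (simp add: mult.commute mult_left_mono)
        then show "T \<noteq> {}" unfolding T_def using q0v by auto
        show "bdd_below T" unfolding bdd_below_def
        proof (intro exI ballI)
          fix t assume "t \<in> T"
          then obtain q where q: "\<forall>i<n. q i \<in> Lt" "NN q \<le> K * s" and t: "t = g q" unfolding T_def by auto
          have "C * Ct * s * NN q \<le> C * Ct * s * (K * s)"
            using q(2) constants Ct s1 by (intro mult_left_mono) auto
          show "a - C * real n * Ct - C * Ct * s * (K * s) - real n * C1 \<le> t"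
          proof -
            have "C2 * (NN q)\<^sup>2 \<ge> 0" using constants by simp
            then show ?thesis using lower[OF q(1)] \<open>C * Ct * s * NN q \<le> C * Ct * s * (K * s)\<close>
              unfolding t gah by linarith
          qed
        qed
        show "\<forall>u\<in>S. \<exists>t\<in>T. t \<le> u"
        proof
          fix u assume "u \<in> S"
          then obtain q where q: "\<forall>i<n. q i \<in> Lt" and u: "u = g q" unfolding S_def by auto
          show "\<exists>t\<in>T. t \<le> u"
          proof (cases "NN q \<le> K * s")
            case True
            then show ?thesis unfolding T_def u using q by auto
          next
            case False
            have qd: "C2 * (NN q)\<^sup>2 - (C * Ct) * s * NN q \<ge> s\<^sup>2 * A"
              by (rule quad_aux) (use s1 K1 constants Ct A0 False in auto)
            have eqA: "s\<^sup>2 * A = C * real n * Ct + C * (1 + norm q0) * real n * Ct + 2 * (real n * C1) + real n * C3 * (norm q0)\<^sup>2"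
              unfolding A_def ns by (simp add: algebra_simps)
            have "h q0v \<le> h q" using lower[OF q] upper qd eqA by linarith
            moreover have "NN q0v \<le> K * s" using NNq0 K1 s1 by (simp add: mult.commute mult_left_mono)
            ultimately show ?thesis unfolding T_def u using q0v gah
              by (intro bexI[of _ "g q0v"]) auto
          qed
        qed
      qed
      then show "Hn (\<lambda>x \<mu> q. f1 x \<mu> + f2 x \<mu> q) (\<lambda>x \<mu> q. l1 x \<mu> + l2 x \<mu> q) Lt n x \<mu> p
           = Hn_m (\<lambda>x \<mu> q. f1 x \<mu> + f2 x \<mu> q) (\<lambda>x \<mu> q. l1 x \<mu> + l2 x \<mu> q) Lt (K * sqrt (real n)) n x \<mu> p"
        unfolding Hn_def Hn_m_def S_def T_def g_def NN_def s_def by simp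
    qed
  qed
qed

end
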